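(* Let $M\colon\mathbb{R}^2\to\mathbf{Vec}$ be a persistence module such that for every $(i,j)\in\mathbb{Z}^2$ the restriction $M|_{[i,i+1]\times[j,j+1]}$ is middle exact. Then $M$ is middle exact.
   Context: $\mathbb{R}^2$ and its subsets carry the product order. A module $M$ over $Q\subseteq\mathbb{R}^2$ is middle exact if for all $x\le x'$, $y\le y'$ with $a=(x,y),b=(x,y'),c=(x',y),d=(x',y')$ all in $Q$, the sequence $M_a\xrightarrow{(M(a\le b),M(a\le c))}M_b\oplus M_c\xrightarrow{M(b\le d)-M(c\le d)}M_d$ is exact at the middle. *)

theory Defs
  imports Main "HOL-Analysis.Analysis"
begin

definition le2 :: "real \<times> real \<Rightarrow> real \<times> real \<Rightarrow> bool" where
  "le2 a b \<longleftrightarrow> fst a \<le> fst b \<and> snd a \<le> snd b"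

text \<open>All spaces M_a are realised as subspaces V a of one ambient 'k-vector space 'v
  (scalar multiplication s); the structure map M(a \<le> b) is F a b, which is required
  to be linear from V a to V b.\<close>
definition pers_module ::
  "('k::field \<Rightarrow> 'v::ab_group_add \<Rightarrow> 'v) \<Rightarrow> (real \<times> real) set \<Rightarrow>
   (real \<times> real \<Rightarrow> 'v set) \<Rightarrow> (real \<times> real \<Rightarrow> real \<times> real \<Rightarrow> 'v \<Rightarrow> 'v) \<Rightarrow> bool" where
  "pers_module s Q V F \<longleftrightarrow>
     vector_space s \<and>
     (\<forall>a\<in>Q. module.subspace s (V a)) \<and>
     (\<forall>a\<in>Q. \<forall>b\<in>Q. le2 a b \<longrightarrow>
        (\<forall>x\<in>V a. F a b x \<in> V b) \<and>
        (\<forall>x\<in>V a. \<forall>y\<in>V a. F a b (x + y) = F a b x + F a b y) \<and>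
        (\<forall>c. \<forall>x\<in>V a. F a b (s c x) = s c (F a b x))) \<and>
     (\<forall>a\<in>Q. \<forall>x\<in>V a. F a a x = x) \<and>
     (\<forall>a\<in>Q. \<forall>b\<in>Q. \<forall>c\<in>Q. le2 a b \<longrightarrow> le2 b c \<longrightarrow>
        (\<forall>x\<in>V a. F b c (F a b x) = F a c x))"

text \<open>Middle exactness of the module (V,F) restricted to Q: for every square
  a=(x,y), b=(x,y'), c=(x',y), d=(x',y') in Q with x \<le> x', y \<le> y', the sequence
  M_a \<rightarrow> M_b \<oplus> M_c \<rightarrow> M_d is exact at M_b \<oplus> M_c.\<close>
definition middle_exact ::
  "(real \<times> real) set \<Rightarrow> (real \<times> real \<Rightarrow> 'v::ab_group_add set) \<Rightarrow>
   (real \<times> real \<Rightarrow> real \<times> real \<Rightarrow> 'v \<Rightarrow> 'v) \<Rightarrow> bool" where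
  "middle_exact Q V F \<longleftrightarrow>
     (\<forall>x x' y y'. x \<le> x' \<longrightarrow> y \<le> y' \<longrightarrow>
        (x, y) \<in> Q \<longrightarrow> (x, y') \<in> Q \<longrightarrow> (x', y) \<in> Q \<longrightarrow> (x', y') \<in> Q \<longrightarrow>
        (let a = (x, y); b = (x, y'); c = (x', y); d = (x', y') in
          (\<lambda>u. (F a b u, F a c u)) ` V a =
          {(v, w). v \<in> V b \<and> w \<in> V c \<and> F b d v - F c d w = 0}))"

definition unit_square :: "int \<Rightarrow> int \<Rightarrow> (real \<times> real) set" where
  "unit_square i j = {real_of_int i .. real_of_int i + 1} \<times> {real_of_int j .. real_of_int j + 1}"

end

theory Submission
  imports Defs
begin

lemma pm_map:
  assumes "pers_module s UNIV V F" "le2 a b" "x \<in> V a"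
  shows "F a b x \<in> V b"
  using assms unfolding pers_module_def by blast

lemma pm_comp:
  assumes "pers_module s UNIV V F" "le2 a b" "le2 b c" "x \<in> V a"
  shows "F b c (F a b x) = F a c x"
  using assms unfolding pers_module_def by blast

definition Rect :: "(real \<times> real \<Rightarrow> 'v::ab_group_add set) \<Rightarrow>
   (real \<times> real \<Rightarrow> real \<times> real \<Rightarrow> 'v \<Rightarrow> 'v) \<Rightarrow> real \<Rightarrow> real \<Rightarrow> real \<Rightarrow> real \<Rightarrow> bool" where
  "Rect V F x x' y y' \<longleftrightarrow>
    (\<forall>v\<in>V (x,y'). \<forall>w\<in>V (x',y). F (x,y') (x',y') v - F (x',y) (x',y') w = 0 \<longrightarrow>
      (\<exists>u\<in>V (x,y). F (x,y) (x,y') u = v \<and> F (x,y) (x',y) u = w))"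

lemma interval_glue:
  fixes P :: "real \<Rightarrow> real \<Rightarrow> bool"
  assumes loc: "\<And>x x'. x \<le> x' \<Longrightarrow> x' \<le> of_int \<lfloor>x\<rfloor> + 1 \<Longrightarrow> P x x'"
    and glue: "\<And>x y z. x \<le> y \<Longrightarrow> y \<le> z \<Longrightarrow> P x y \<Longrightarrow> P y z \<Longrightarrow> P x z"
  shows "x \<le> x' \<Longrightarrow> P x x'"
proof -
  have main: "\<And>x x'. x \<le> x' \<Longrightarrow> x' \<le> of_int \<lfloor>x\<rfloor> + real n + 1 \<Longrightarrow> P x x'" for n :: nat
  proof (induction n)
    case 0
    then show ?case using loc by simp
  next
    case (Suc n)
    show ?case
    proof (cases "x' \<le> of_int \<lfloor>x\<rfloor> + 1")
      case True
      then show ?thesis using loc Suc.prems by blast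
    next
      case False
      define x1 where "x1 = of_int \<lfloor>x\<rfloor> + (1::real)"
      have fl: "\<lfloor>x1\<rfloor> = \<lfloor>x\<rfloor> + 1" unfolding x1_def by simp
      have "x \<le> x1" unfolding x1_def by linarith
      moreover have "x1 \<le> x'" using False x1_def by simp
      moreover have "P x x1" using loc[of x x1] \<open>x \<le> x1\<close> x1_def by simp
      moreover have "P x1 x'"
        using Suc.IH[of x1 x'] \<open>x1 \<le> x'\<close> Suc.prems fl by simp
      ultimately show ?thesis using glue by blast
    qed
  qed
  assume "x \<le> x'"
  obtain n :: nat where "x' - of_int \<lfloor>x\<rfloor> \<le> real n" using real_arch_simple by blast
  then show "P x x'" using main[of x x' n] \<open>x \<le> x'\<close> by simp
qed

theorem lemma5p10:
  fixes s :: "'k::field \<Rightarrow> 'v::ab_group_add \<Rightarrow> 'v"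
    and V :: "real \<times> real \<Rightarrow> 'v set"
    and F :: "real \<times> real \<Rightarrow> real \<times> real \<Rightarrow> 'v \<Rightarrow> 'v"
  assumes pm: "pers_module s UNIV V F"
    and sq: "\<forall>i j :: int. middle_exact (unit_square i j) V F"
  shows "middle_exact UNIV V F"
proof -
  note map = pm_map[OF pm] and comp = pm_comp[OF pm]
  have loc: "Rect V F x x' y y'"
    if "x \<le> x'" "x' \<le> of_int \<lfloor>x\<rfloor> + 1" "y \<le> y'" "y' \<le> of_int \<lfloor>y\<rfloor> + 1" for x x' y y'
  proof -
    have me: "middle_exact (unit_square \<lfloor>x\<rfloor> \<lfloor>y\<rfloor>) V F" using sq by blast
    have ins: "(x,y) \<in> unit_square \<lfloor>x\<rfloor> \<lfloor>y\<rfloor>" "(x,y') \<in> unit_square \<lfloor>x\<rfloor> \<lfloor>y\<rfloor>"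
      "(x',y) \<in> unit_square \<lfloor>x\<rfloor> \<lfloor>y\<rfloor>" "(x',y') \<in> unit_square \<lfloor>x\<rfloor> \<lfloor>y\<rfloor>"
      using that unfolding unit_square_def by (auto, linarith+)
    have eq: "(\<lambda>u. (F (x,y) (x,y') u, F (x,y) (x',y) u)) ` V (x,y) =
          {(v, w). v \<in> V (x,y') \<and> w \<in> V (x',y) \<and> F (x,y') (x',y') v - F (x',y) (x',y') w = 0}"
      using me that ins unfolding middle_exact_def Let_def by blast
    show ?thesis unfolding Rect_def
    proof (intro ballI impI)
      fix v w assume "v \<in> V (x,y')" "w \<in> V (x',y)" "F (x,y') (x',y') v - F (x',y) (x',y') w = 0"
      then have "(v,w) \<in> (\<lambda>u. (F (x,y) (x,y') u, F (x,y) (x',y) u)) ` V (x,y)" using eq by blast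
      then show "\<exists>u\<in>V (x,y). F (x,y) (x,y') u = v \<and> F (x,y) (x',y) u = w" by auto
    qed
  qed
  have hglue: "Rect V F x0 x2 y y'"
    if "x0 \<le> x1" "x1 \<le> x2" "y \<le> y'" "Rect V F x0 x1 y y'" "Rect V F x1 x2 y y'" for x0 x1 x2 y y'
  proof -
    have L: "\<And>v w. v\<in>V (x0,y') \<Longrightarrow> w\<in>V (x1,y) \<Longrightarrow> F (x0,y') (x1,y') v - F (x1,y) (x1,y') w = 0 \<Longrightarrow>
      (\<exists>u\<in>V (x0,y). F (x0,y) (x0,y') u = v \<and> F (x0,y) (x1,y) u = w)"
      using that(4) unfolding Rect_def by blast
    have R: "\<And>v w. v\<in>V (x1,y') \<Longrightarrow> w\<in>V (x2,y) \<Longrightarrow> F (x1,y') (x2,y') v - F (x2,y) (x2,y') w = 0 \<Longrightarrow>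
      (\<exists>u\<in>V (x1,y). F (x1,y) (x1,y') u = v \<and> F (x1,y) (x2,y) u = w)"
      using that(5) unfolding Rect_def by blast
    show ?thesis unfolding Rect_def
    proof (intro ballI impI)
      fix v w assume v: "v \<in> V (x0,y')" and w: "w \<in> V (x2,y)"
        and e: "F (x0,y') (x2,y') v - F (x2,y) (x2,y') w = 0"
      define v' where "v' = F (x0,y') (x1,y') v"
      have v'V: "v' \<in> V (x1,y')" unfolding v'_def using map v that by (simp add: le2_def)
      have "F (x1,y') (x2,y') v' = F (x0,y') (x2,y') v"
        unfolding v'_def using comp v that by (simp add: le2_def)
      with e have "F (x1,y') (x2,y') v' - F (x2,y) (x2,y') w = 0" by simp
      then obtain u' where u': "u' \<in> V (x1,y)" "F (x1,y) (x1,y') u' = v'" "F (x1,y) (x2,y) u' = w"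
        using R[OF v'V w] by blast
      have "F (x0,y') (x1,y') v - F (x1,y) (x1,y') u' = 0" using u' v'_def by simp
      then obtain u where u: "u \<in> V (x0,y)" "F (x0,y) (x0,y') u = v" "F (x0,y) (x1,y) u = u'"
        using L[OF v u'(1)] by blast
      have "F (x0,y) (x2,y) u = F (x1,y) (x2,y) (F (x0,y) (x1,y) u)"
        using comp u(1) that by (simp add: le2_def)
      then show "\<exists>u\<in>V (x0,y). F (x0,y) (x0,y') u = v \<and> F (x0,y) (x2,y) u = w"
        using u u' by auto
    qed
  qed
  have vglue: "Rect V F x x' y0 y2"
    if "y0 \<le> y1" "y1 \<le> y2" "x \<le> x'" "Rect V F x x' y0 y1" "Rect V F x x' y1 y2" for x x' y0 y1 y2
  proof -
    have B: "\<And>v w. v\<in>V (x,y1) \<Longrightarrow> w\<in>V (x',y0) \<Longrightarrow> F (x,y1) (x',y1) v - F (x',y0) (x',y1) w = 0 \<Longrightarrow>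
      (\<exists>u\<in>V (x,y0). F (x,y0) (x,y1) u = v \<and> F (x,y0) (x',y0) u = w)"
      using that(4) unfolding Rect_def by blast
    have T: "\<And>v w. v\<in>V (x,y2) \<Longrightarrow> w\<in>V (x',y1) \<Longrightarrow> F (x,y2) (x',y2) v - F (x',y1) (x',y2) w = 0 \<Longrightarrow>
      (\<exists>u\<in>V (x,y1). F (x,y1) (x,y2) u = v \<and> F (x,y1) (x',y1) u = w)"
      using that(5) unfolding Rect_def by blast
    show ?thesis unfolding Rect_def
    proof (intro ballI impI)
      fix v w assume v: "v \<in> V (x,y2)" and w: "w \<in> V (x',y0)"
        and e: "F (x,y2) (x',y2) v - F (x',y0) (x',y2) w = 0"
      define w' where "w' = F (x',y0) (x',y1) w"
      have w'V: "w' \<in> V (x',y1)" unfolding w'_def using map w that by (simp add: le2_def)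
      have "F (x',y1) (x',y2) w' = F (x',y0) (x',y2) w"
        unfolding w'_def using comp w that by (simp add: le2_def)
      with e have "F (x,y2) (x',y2) v - F (x',y1) (x',y2) w' = 0" by simp
      then obtain u' where u': "u' \<in> V (x,y1)" "F (x,y1) (x,y2) u' = v" "F (x,y1) (x',y1) u' = w'"
        using T[OF v w'V] by blast
      have "F (x,y1) (x',y1) u' - F (x',y0) (x',y1) w = 0" using u' w'_def by simp
      then obtain u where u: "u \<in> V (x,y0)" "F (x,y0) (x,y1) u = u'" "F (x,y0) (x',y0) u = w"
        using B[OF u'(1) w] by blast
      have "F (x,y0) (x,y2) u = F (x,y1) (x,y2) (F (x,y0) (x,y1) u)"
        using comp u(1) that by (simp add: le2_def)
      then show "\<exists>u\<in>V (x,y0). F (x,y0) (x,y2) u = v \<and> F (x,y0) (x',y0) u = w"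
        using u u' by auto
    qed
  qed
  have strip: "Rect V F x x' y y'"
    if "y \<le> y'" "y' \<le> of_int \<lfloor>y\<rfloor> + 1" "x \<le> x'" for x x' y y'
    using interval_glue[where P="\<lambda>a b. Rect V F a b y y'"] loc hglue that by blast
  have all: "Rect V F x x' y y'" if "x \<le> x'" "y \<le> y'" for x x' y y'
    using interval_glue[where P="\<lambda>a b. \<forall>x x'. x \<le> x' \<longrightarrow> Rect V F x x' a b"] strip vglue that
    by blast
  show ?thesis unfolding middle_exact_def Let_def
  proof (intro allI impI)
    fix x x' y y' :: real assume xy: "x \<le> x'" "y \<le> y'"
    show "(\<lambda>u. (F (x,y) (x,y') u, F (x,y) (x',y) u)) ` V (x,y) =
          {(v, w). v \<in> V (x,y') \<and> w \<in> V (x',y) \<and> F (x,y') (x',y') v - F (x',y) (x',y') w = 0}"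
    proof
      show "(\<lambda>u. (F (x,y) (x,y') u, F (x,y) (x',y) u)) ` V (x,y) \<subseteq> {(v, w). v \<in> V (x,y') \<and> w \<in> V (x',y) \<and> F (x,y') (x',y') v - F (x',y) (x',y') w = 0}"
      proof
        fix p assume "p \<in> (\<lambda>u. (F (x,y) (x,y') u, F (x,y) (x',y) u)) ` V (x,y)"
        then obtain u where u: "u \<in> V (x,y)" "p = (F (x,y) (x,y') u, F (x,y) (x',y) u)" by blast
        have "F (x,y') (x',y') (F (x,y) (x,y') u) = F (x,y) (x',y') u"
          using comp u(1) xy by (simp add: le2_def)
        moreover have "F (x',y) (x',y') (F (x,y) (x',y) u) = F (x,y) (x',y') u"
          using comp u(1) xy by (simp add: le2_def)
        ultimately show "p \<in> {(v, w). v \<in> V (x,y') \<and> w \<in> V (x',y) \<and> F (x,y') (x',y') v - F (x',y) (x',y') w = 0}"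
          using u map xy by (simp add: le2_def)
      qed
    next
      show "{(v, w). v \<in> V (x,y') \<and> w \<in> V (x',y) \<and> F (x,y') (x',y') v - F (x',y) (x',y') w = 0} \<subseteq> (\<lambda>u. (F (x,y) (x,y') u, F (x,y) (x',y) u)) ` V (x,y)"
        using all[OF xy] unfolding Rect_def by (auto simp: image_iff)
    qed
  qed
qed

end
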